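(* There is a deterministic sorting algorithm in the rank query model that runs in $k$ rounds and asks a total of $O(k\,n^{1+1/k})$ queries on every input of $n$ elements.
   Context: Rank query model: items $x_1,\ldots,x_n$ whose ranks form an unknown permutation of $\{1,\ldots,n\}$; a query asks "How is $\mathrm{rank}(x_i)$ compared to $m$?" with answer "$<$", "$=$" or "$>$"; sorting means determining all ranks. An algorithm runs in $k$ rounds if in each of $k$ rounds it submits a set of queries chosen depending only on answers of earlier rounds, then receives all answers. *)

theory Defs
  imports Complex_Main
begin

text \<open>Rank query model. Items are indexed 0..<n; their ranks form a permutation
  \<pi> of {1..n}. A query (i, m) asks how rank(x_i) compares to m.\<close>

datatype answer = Less | Equal | Greater

type_synonym query = "nat \<times> nat"

definition rank_perm :: "nat \<Rightarrow> (nat \<Rightarrow> nat) \<Rightarrow> bool" where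
  "rank_perm n \<pi> \<longleftrightarrow> bij_betw \<pi> {..<n} {1..n}"

definition ans :: "(nat \<Rightarrow> nat) \<Rightarrow> query \<Rightarrow> answer" where
  "ans \<pi> q = (if \<pi> (fst q) < snd q then Less
               else if \<pi> (fst q) = snd q then Equal else Greater)"

text \<open>A deterministic round-based strategy: in round j (counting from 0) it chooses
  a set of queries as a function of the answers received in earlier rounds,
  given as a partial map from already asked queries to their answers.\<close>
type_synonym strategy = "nat \<Rightarrow> (query \<Rightarrow> answer option) \<Rightarrow> query set"

fun asked :: "strategy \<Rightarrow> (nat \<Rightarrow> nat) \<Rightarrow> nat \<Rightarrow> query set" where
  "asked A \<pi> 0 = {}"
| "asked A \<pi> (Suc j) = asked A \<pi> j \<union>
     A j (\<lambda>q. if q \<in> asked A \<pi> j then Some (ans \<pi> q) else None)"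

definition known :: "strategy \<Rightarrow> (nat \<Rightarrow> nat) \<Rightarrow> nat \<Rightarrow> query \<Rightarrow> answer option" where
  "known A \<pi> j = (\<lambda>q. if q \<in> asked A \<pi> j then Some (ans \<pi> q) else None)"

definition round_queries :: "strategy \<Rightarrow> (nat \<Rightarrow> nat) \<Rightarrow> nat \<Rightarrow> query set" where
  "round_queries A \<pi> j = A j (known A \<pi> j)"

definition num_queries :: "strategy \<Rightarrow> (nat \<Rightarrow> nat) \<Rightarrow> nat \<Rightarrow> nat" where
  "num_queries A \<pi> k = (\<Sum>j<k. card (round_queries A \<pi> j))"

definition sorts_in_rounds :: "nat \<Rightarrow> nat \<Rightarrow> strategy \<Rightarrow> bool" where
  "sorts_in_rounds n k A \<longleftrightarrow>
     (\<forall>\<pi>. rank_perm n \<pi> \<longrightarrow>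
        (\<forall>j<k. finite (round_queries A \<pi> j) \<and> round_queries A \<pi> j \<subseteq> {..<n} \<times> UNIV)) \<and>
     (\<forall>\<pi> \<sigma>. rank_perm n \<pi> \<longrightarrow> rank_perm n \<sigma> \<longrightarrow>
        known A \<pi> k = known A \<sigma> k \<longrightarrow> (\<forall>i<n. \<pi> i = \<sigma> i))"

end

theory Submission
  imports Defs
begin

definition strat :: "nat \<Rightarrow> nat \<Rightarrow> nat \<Rightarrow> strategy" where
  "strat n k b j K = {(i,m). i < n \<and> 1 \<le> m \<and> m \<le> n \<and> b^(k - Suc j) dvd (m - 1) \<and>
      (\<forall>m'. K (i,m') = Some Less \<longrightarrow> m \<le> m') \<and>
      (\<forall>m' a. K (i,m') = Some a \<and> a \<noteq> Less \<longrightarrow> m' \<le> m)}"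

lemma asked_Suc: "asked A \<pi> (Suc j) = asked A \<pi> j \<union> round_queries A \<pi> j"
  by (simp add: round_queries_def known_def)

lemma asked_mono: "j \<le> j' \<Longrightarrow> asked A \<pi> j \<subseteq> asked A \<pi> j'"
proof (induction j' )
  case 0 then show ?case by simp
next
  case (Suc j') then show ?case
    by (cases "j = Suc j'") (auto simp: asked_Suc)
qed

lemma known_Some: "known A \<pi> j q = Some a \<Longrightarrow> a = ans \<pi> q \<and> q \<in> asked A \<pi> j"
  by (auto simp: known_def split: if_splits)

lemma asked_grid:
  "j \<le> k \<Longrightarrow> q \<in> asked (strat n k b) \<pi> j \<Longrightarrow> b^(k-j) dvd (snd q - 1) \<and> 1 \<le> snd q"
proof (induction j arbitrary: q)
  case 0 then show ?case by simp
next
  case (Suc j)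
  have d: "b^(k - Suc j) dvd b^(k-j)" using Suc.prems by (intro le_imp_power_dvd) simp
  from Suc.prems(2) have "q \<in> asked (strat n k b) \<pi> j \<or> q \<in> round_queries (strat n k b) \<pi> j"
    by (metis Un_iff asked_Suc)
  then show ?case
  proof
    assume "q \<in> asked (strat n k b) \<pi> j"
    moreover have "j \<le> k" using Suc.prems(1) by simp
    ultimately have "b^(k-j) dvd (snd q - 1) \<and> 1 \<le> snd q" using Suc.IH by blast
    then show ?thesis using dvd_trans[OF d] by blast
  next
    assume "q \<in> round_queries (strat n k b) \<pi> j"
    then show ?thesis by (auto simp: round_queries_def strat_def)
  qed
qed

lemma strat_mem: "(i,m) \<in> round_queries (strat n k b) \<pi> j \<longleftrightarrow>
   i < n \<and> 1 \<le> m \<and> m \<le> n \<and> b^(k - Suc j) dvd (m - 1) \<and>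
   (\<forall>m'. known (strat n k b) \<pi> j (i,m') = Some Less \<longrightarrow> m \<le> m') \<and>
   (\<forall>m' a. known (strat n k b) \<pi> j (i,m') = Some a \<and> a \<noteq> Less \<longrightarrow> m' \<le> m)"
  unfolding round_queries_def strat_def by (simp only: mem_Collect_eq case_prod_conv)

lemma dvd_le_floor: "(s::nat) dvd x \<Longrightarrow> x \<le> y \<Longrightarrow> x \<le> (y div s) * s"
proof -
  assume a: "s dvd x" "x \<le> y"
  have "(x div s) * s \<le> (y div s) * s" using a(2) by (intro mult_le_mono1 div_le_mono)
  then show ?thesis using dvd_div_mult_self[OF a(1)] by simp
qed

lemma rank_range: "rank_perm n \<pi> \<Longrightarrow> i < n \<Longrightarrow> 1 \<le> \<pi> i \<and> \<pi> i \<le> n"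
  unfolding rank_perm_def bij_betw_def by auto

lemma key:
  assumes rp: "rank_perm n \<pi>" and i: "i < n" and j: "j < k" and b: "b \<ge> 1"
  defines "s \<equiv> b^(k - Suc j)"
  defines "G \<equiv> ((\<pi> i - 1) div s) * s + 1"
  shows "(i, G) \<in> round_queries (strat n k b) \<pi> j"
    and "G + s \<le> n \<Longrightarrow> (i, G + s) \<in> round_queries (strat n k b) \<pi> j"
proof -
  let ?A = "strat n k b"
  let ?K = "known ?A \<pi> j"
  define r where "r = \<pi> i"
  have r: "1 \<le> r" "r \<le> n" using rank_range[OF rp i] r_def by auto
  have spos: "s > 0" using b by (simp add: s_def)
  have sd: "s dvd b^(k-j)" unfolding s_def using j by (intro le_imp_power_dvd) simp
  have gridK: "s dvd (m' - 1) \<and> 1 \<le> m'" if "?K (i,m') = Some a" for m' a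
  proof -
    have im: "(i,m') \<in> asked ?A \<pi> j" using known_Some[OF that] by simp
    have "b^(k-j) dvd (m' - 1) \<and> 1 \<le> m'" using asked_grid[OF _ im] j by simp
    then show ?thesis using dvd_trans[OF sd] by blast
  qed
  have ansK: "a = ans \<pi> (i,m')" if "?K (i,m') = Some a" for m' a
    using known_Some[OF that] by simp
  have Gle: "G \<le> r"
  proof -
    have "((r-1) div s)*s \<le> r-1" by (rule div_times_less_eq_dividend)
    then show ?thesis using r unfolding G_def r_def[symmetric] by linarith
  qed
  have Gs: "r < G + s"
  proof -
    have "r - 1 < ((r-1) div s + 1) * s" using spos
      using dividend_less_div_times[OF spos, of "r-1"] by (simp add: algebra_simps)
    then show ?thesis unfolding G_def r_def[symmetric] using r by (simp add: algebra_simps)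
  qed
  have Gd: "s dvd (G - 1)" by (simp add: G_def)
  show "(i, G) \<in> round_queries ?A \<pi> j"
    unfolding strat_mem
  proof (intro conjI allI impI)
    show "i < n" by fact
    show "1 \<le> G" by (simp add: G_def)
    show "G \<le> n" using Gle r by simp
    show "b ^ (k - Suc j) dvd G - 1" using Gd s_def by simp
    fix m' assume "?K (i,m') = Some Less"
    then have "ans \<pi> (i,m') = Less" using ansK by metis
    then have "r < m'" by (simp add: ans_def r_def split: if_splits)
    then show "G \<le> m'" using Gle by simp
  next
    fix m' a assume h: "?K (i,m') = Some a \<and> a \<noteq> Less"
    then have "ans \<pi> (i,m') \<noteq> Less" using ansK by metis
    then have "m' \<le> r" by (simp add: ans_def r_def split: if_splits)
    moreover have "s dvd (m' - 1)" "1 \<le> m'" using gridK h by blast+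
    ultimately have "m' - 1 \<le> ((r-1) div s) * s" using dvd_le_floor by simp
    then show "m' \<le> G" unfolding G_def r_def by simp
  qed
  assume Gn: "G + s \<le> n"
  show "(i, G + s) \<in> round_queries ?A \<pi> j"
    unfolding strat_mem
  proof (intro conjI allI impI)
    show "i < n" by fact
    show "G + s \<le> n" by fact
    show "1 \<le> G + s" by (simp add: G_def)
    have "G + s - 1 = (G - 1) + s" by (simp add: G_def)
    then show "b ^ (k - Suc j) dvd G + s - 1" using Gd unfolding s_def[symmetric]
      by (simp add: dvd_add)
    fix m' assume "?K (i,m') = Some Less"
    moreover then have "ans \<pi> (i,m') = Less" using ansK by metis
    then have rm: "r < m'" by (simp add: ans_def r_def split: if_splits)
    ultimately have "s dvd (m' - 1)" "1 \<le> m'" using gridK by blast+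
    then obtain c where c: "m' - 1 = c * s" by (metis dvd_def mult.commute)
    have "(r - 1) div s < c"
    proof (rule ccontr)
      assume "\<not> ?thesis"
      then have "c * s \<le> ((r-1) div s) * s" by simp
      also have "\<dots> \<le> r - 1" by simp
      finally show False using c rm r by linarith
    qed
    then have "((r - 1) div s + 1) * s \<le> c * s" by (intro mult_le_mono1) simp
    then show "G + s \<le> m'" using c \<open>1 \<le> m'\<close> unfolding G_def r_def by (simp add: algebra_simps)
  next
    fix m' a assume h: "?K (i,m') = Some a \<and> a \<noteq> Less"
    then have "ans \<pi> (i,m') \<noteq> Less" using ansK by metis
    then have "m' \<le> r" by (simp add: ans_def r_def split: if_splits)
    then show "m' \<le> G + s" using Gs by simp
  qed
qed


lemma floor_bounds:
  assumes "(s::nat) > 0" "1 \<le> r"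
  shows "((r-1) div s)*s + 1 \<le> r" "r < ((r-1) div s)*s + 1 + s"
proof -
  have "((r-1) div s)*s \<le> r-1" by (rule div_times_less_eq_dividend)
  then show "((r-1) div s)*s + 1 \<le> r" using assms by linarith
  have "r - 1 < s + ((r-1) div s) * s" using dividend_less_div_times[OF assms(1), of "r-1"] .
  then show "r < ((r-1) div s)*s + 1 + s" using assms by linarith
qed

lemma grid_card:
  assumes spos: "(s::nat) > 0" and Gd: "s dvd (G - 1)" and G1: "1 \<le> G"
  shows "finite {m. G \<le> m \<and> m \<le> G + b*s \<and> s dvd (m - 1)} \<and>
         card {m. G \<le> m \<and> m \<le> G + b*s \<and> s dvd (m - 1)} \<le> b + 1"
proof -
  let ?T = "{m. G \<le> m \<and> m \<le> G + b*s \<and> s dvd (m - 1)}"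
  have fin: "finite ?T" by (rule finite_subset[of _ "{..G + b*s}"]) auto
  have dv: "s dvd (m - G)" if "m \<in> ?T" for m
  proof -
    have "m - G = (m - 1) - (G - 1)" using that G1 by auto
    then show ?thesis using dvd_diff_nat[OF _ Gd, of "m-1"] that by simp
  qed
  have inj: "inj_on (\<lambda>m. (m - G) div s) ?T"
  proof (rule inj_onI)
    fix x y assume x: "x \<in> ?T" and y: "y \<in> ?T" and e: "(x - G) div s = (y - G) div s"
    have "x - G = ((x - G) div s) * s" using dvd_div_mult_self[OF dv[OF x]] by simp
    also have "\<dots> = ((y - G) div s) * s" using e by simp
    also have "\<dots> = y - G" using dvd_div_mult_self[OF dv[OF y]] by simp
    finally have "x - G = y - G" .
    then show "x = y" using x y by auto
  qed
  have img: "(\<lambda>m. (m - G) div s) ` ?T \<subseteq> {0..b}"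
  proof
    fix c assume "c \<in> (\<lambda>m. (m - G) div s) ` ?T"
    then obtain m where m: "m \<in> ?T" "c = (m - G) div s" by blast
    have "m - G \<le> b * s" using m by auto
    then have "(m - G) div s \<le> (b*s) div s" by (rule div_le_mono)
    then show "c \<in> {0..b}" using m spos by simp
  qed
  have "card ?T = card ((\<lambda>m. (m - G) div s) ` ?T)" using card_image[OF inj] by simp
  also have "\<dots> \<le> card {0..b}" by (rule card_mono[OF _ img]) simp
  finally show ?thesis using fin by simp
qed

lemma item_count:
  assumes rp: "rank_perm n \<pi>" and i: "i < n" and j: "j < k" and b: "b \<ge> 1"
    and nb: "n \<le> b^k"
  shows "finite {m. (i,m) \<in> round_queries (strat n k b) \<pi> j} \<and>
         card {m. (i,m) \<in> round_queries (strat n k b) \<pi> j} \<le> b + 1"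
proof -
  let ?A = "strat n k b"
  define s where "s = b^(k - Suc j)"
  define S where "S = b^(k - j)"
  have SbS: "S = b * s" unfolding S_def s_def using j
    by (metis Suc_diff_Suc power_Suc)
  define r where "r = \<pi> i"
  have r: "1 \<le> r" "r \<le> n" using rank_range[OF rp i] r_def by auto
  have spos: "s > 0" using b by (simp add: s_def)
  have Spos: "S > 0" using b by (simp add: S_def)
  define G where "G = ((r-1) div S)*S + 1"
  have GS: "G \<le> r" "r < G + S" using floor_bounds[OF Spos r(1)] G_def by auto
  have Gd: "s dvd (G - 1)" unfolding G_def SbS by simp
  have sub: "{m. (i,m) \<in> round_queries ?A \<pi> j} \<subseteq> {m. G \<le> m \<and> m \<le> G + b*s \<and> s dvd (m - 1)}"
  proof
    fix m assume "m \<in> {m. (i,m) \<in> round_queries ?A \<pi> j}"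
    then have mq: "(i,m) \<in> round_queries ?A \<pi> j" by simp
    note M = mq[unfolded strat_mem]
    have dvm: "s dvd (m - 1)" using M s_def by simp
    have "G \<le> m \<and> m \<le> G + S"
    proof (cases j)
      case 0
      have "r - 1 < S" using r nb 0 S_def by simp
      then have "G = 1" unfolding G_def by simp
      moreover have "m \<le> n" using M by simp
      ultimately show ?thesis using M nb 0 S_def by simp
    next
      case (Suc j0)
      have S0: "S = b^(k - Suc j0)" using Suc S_def by simp
      have j0: "j0 < k" using Suc j by simp
      have asub: "round_queries ?A \<pi> j0 \<subseteq> asked ?A \<pi> j" using Suc asked_Suc by blast
      have "(i, G) \<in> round_queries ?A \<pi> j0"
        using key(1)[OF rp i j0 b] unfolding G_def S0 r_def by simp
      then have "known ?A \<pi> j (i,G) = Some (ans \<pi> (i,G))" using asub known_def by auto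
      moreover have "ans \<pi> (i,G) \<noteq> Less" using GS unfolding ans_def r_def by simp
      ultimately have "G \<le> m" using M by blast
      moreover have "m \<le> G + S"
      proof (cases "G + S \<le> n")
        case True
        have "(i, G + S) \<in> round_queries ?A \<pi> j0"
          using key(2)[OF rp i j0 b] True unfolding G_def S0 r_def by simp
        then have "known ?A \<pi> j (i,G+S) = Some (ans \<pi> (i,G+S))" using asub known_def by auto
        moreover have "ans \<pi> (i,G+S) = Less" using GS unfolding ans_def r_def by simp
        ultimately show ?thesis using M by auto
      next
        case False then show ?thesis using M by simp
      qed
      ultimately show ?thesis by simp
    qed
    then show "m \<in> {m. G \<le> m \<and> m \<le> G + b*s \<and> s dvd (m - 1)}" using dvm SbS by simp
  qed
  have "1 \<le> G" unfolding G_def by simp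
  note gc = grid_card[OF spos Gd this, of b]
  have f: "finite {m. (i,m) \<in> round_queries ?A \<pi> j}" using finite_subset[OF sub] gc by blast
  have "card {m. (i,m) \<in> round_queries ?A \<pi> j} \<le> card {m. G \<le> m \<and> m \<le> G + b*s \<and> s dvd (m - 1)}"
    using card_mono[OF _ sub] gc by blast
  then show ?thesis using f gc by linarith
qed

lemma rq_sub: "round_queries (strat n k b) \<pi> j \<subseteq> {..<n} \<times> {1..n}"
  unfolding round_queries_def strat_def by auto

lemma round_count:
  assumes rp: "rank_perm n \<pi>" and j: "j < k" and b: "b \<ge> 1" and nb: "n \<le> b^k"
  shows "card (round_queries (strat n k b) \<pi> j) \<le> n * (b + 1)"
proof -
  let ?R = "round_queries (strat n k b) \<pi> j"
  let ?M = "\<lambda>i. {m. (i,m) \<in> ?R}"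
  have eq: "?R = Sigma {..<n} ?M"
  proof
    show "?R \<subseteq> Sigma {..<n} ?M"
    proof
      fix q assume q: "q \<in> ?R"
      obtain a c where ac: "q = (a,c)" by (cases q)
      have "a < n" using q ac rq_sub[of n k b \<pi> j] by blast
      then show "q \<in> Sigma {..<n} ?M" using q ac by simp
    qed
    show "Sigma {..<n} ?M \<subseteq> ?R" by (rule subsetI) (clarsimp)
  qed
  have "card ?R = card (Sigma {..<n} ?M)" by (rule arg_cong[OF eq])
  also have "\<dots> = (\<Sum>i<n. card (?M i))"
    by (rule card_SigmaI) (use item_count[OF rp _ j b nb] in auto)
  also have "\<dots> \<le> (\<Sum>i<n. b + 1)"
    by (rule sum_mono) (use item_count[OF rp _ j b nb] in auto)
  finally show ?thesis by simp
qed

lemma sorts: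
  assumes b: "b \<ge> 1" and k: "k \<ge> 1"
  shows "sorts_in_rounds n k (strat n k b)"
  unfolding sorts_in_rounds_def
proof (intro conjI allI impI)
  fix \<pi> j assume "rank_perm n \<pi>" "j < k"
  show "finite (round_queries (strat n k b) \<pi> j)"
    by (rule finite_subset[OF rq_sub]) simp
  show "round_queries (strat n k b) \<pi> j \<subseteq> {..<n} \<times> UNIV" using rq_sub by blast
next
  fix \<pi> \<sigma> i assume rp: "rank_perm n \<pi>" and rs: "rank_perm n \<sigma>"
    and kn: "known (strat n k b) \<pi> k = known (strat n k b) \<sigma> k" and i: "i < n"
  let ?A = "strat n k b"
  define r where "r = \<pi> i"
  have r: "1 \<le> r" using rank_range[OF rp i] r_def by auto
  have kk: "k - 1 < k" "k - Suc (k - 1) = 0" "Suc (k - 1) = k" using k by auto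
  have "(i, r) \<in> round_queries ?A \<pi> (k-1)"
    using key(1)[OF rp i kk(1) b] r unfolding kk(2) r_def by simp
  then have "(i, r) \<in> asked ?A \<pi> k" using asked_Suc[of ?A \<pi> "k-1"] kk(3) by auto
  then have "known ?A \<pi> k (i,r) = Some Equal" unfolding known_def ans_def r_def by simp
  then have "known ?A \<sigma> k (i,r) = Some Equal" using kn by simp
  then have "ans \<sigma> (i,r) = Equal" using known_Some by metis
  then show "\<pi> i = \<sigma> i" unfolding ans_def r_def by (auto split: if_splits)
qed

theorem proposition16:
  shows "\<exists>C::real. C > 0 \<and>
    (\<forall>k n. k \<ge> 1 \<longrightarrow>
      (\<exists>A. sorts_in_rounds n k A \<and>
        (\<forall>\<pi>. rank_perm n \<pi> \<longrightarrow>
           real (num_queries A \<pi> k) \<le> C * real k * real n powr (1 + 1 / real k))))"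
proof (intro exI[of _ 3] conjI allI impI)
  show "(3::real) > 0" by simp
  fix k n :: nat assume k: "k \<ge> 1"
  show "\<exists>A. sorts_in_rounds n k A \<and>
        (\<forall>\<pi>. rank_perm n \<pi> \<longrightarrow>
           real (num_queries A \<pi> k) \<le> 3 * real k * real n powr (1 + 1 / real k))"
  proof (cases "n = 0")
    case True
    have "num_queries (strat n k 1) \<pi> k = 0" for \<pi>
      unfolding num_queries_def using rq_sub[of n k 1 \<pi>] True by (simp add: subset_empty)
    then show ?thesis using sorts[of 1 k n] k by (intro exI[of _ "strat n k 1"]) simp
  next
    case False
    define x where "x = real n powr (1 / real k)"
    define b where "b = nat \<lceil>x\<rceil>"
    have n1: "real n \<ge> 1" using False by simp
    have x1: "x \<ge> 1" unfolding x_def using n1 k by (intro ge_one_powr_ge_zero) auto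
    have bx: "x \<le> real b" unfolding b_def by (rule real_nat_ceiling_ge)
    have bx2: "real b \<le> x + 1" unfolding b_def using x1 by linarith
    have b1: "b \<ge> 1" using bx x1 by linarith
    have "real n = x ^ k" unfolding x_def using n1 k by (simp add: powr_power)
    also have "\<dots> \<le> real b ^ k" using bx x1 by (intro power_mono) auto
    finally have nb: "n \<le> b ^ k" by (metis of_nat_le_iff of_nat_power)
    have "sorts_in_rounds n k (strat n k b)" using sorts[OF b1 k] .
    moreover have "real (num_queries (strat n k b) \<pi> k) \<le> 3 * real k * real n powr (1 + 1 / real k)"
      if rp: "rank_perm n \<pi>" for \<pi>
    proof -
      have "num_queries (strat n k b) \<pi> k \<le> (\<Sum>j<k. n * (b + 1))"
        unfolding num_queries_def by (rule sum_mono) (use round_count[OF rp _ b1 nb] in auto)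
      moreover have "(\<Sum>j<k. n * (b + 1)) = k * (n * (b + 1))"
        by (simp only: sum_constant card_lessThan of_nat_id)
      ultimately have "num_queries (strat n k b) \<pi> k \<le> k * (n * (b + 1))" by (simp only:)
      then have h0: "real (num_queries (strat n k b) \<pi> k) \<le> real (k * (n * (b + 1)))"
        by (simp only: of_nat_le_iff)
      have h01: "real (k * (n * (b + 1))) = real k * (real n * (real b + 1))"
        by (simp only: of_nat_mult of_nat_add of_nat_1)
      have h1: "real (num_queries (strat n k b) \<pi> k) \<le> real k * (real n * (real b + 1))"
        using h0 h01 by linarith
      have h2: "real k * (real n * (real b + 1)) \<le> real k * (real n * (3 * x))"
        using bx2 x1 by (intro mult_left_mono) auto
      have h3: "real n powr (1 + 1 / real k) = real n * x"
        unfolding x_def using n1 by (simp add: powr_add)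
      have e: "3 * real k * (real n * x) = real k * (real n * (3 * x))" by (simp only: mult_ac)
      show ?thesis unfolding h3 using h1 h2 e by linarith
    qed
    ultimately show ?thesis by blast
  qed
qed

end
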